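(* Let $G$ be a (finite, or countable locally finite) cavity-monotone network such that for every $t>0$ the cavity equation $\mathbf x=t\Gamma_G(\mathbf x)$ has a unique globally attractive solution $\mathbf x(t)$. Then for all $0<s\le t$, $$\frac{s}{t}\,\mathbf x(t)\le\mathbf x(s)\le\mathbf x(t)$$ coordinatewise. In particular $t\mapsto\mathbf x(t)$ is continuous on $(0,\infty)$.
   Context: Measures over subsets: for a finite set $E$, a measure is $\mu:2^E\to[0,\infty)$; $Z(\mathbf w)=\sum_{F\subseteq E}\mu(F)\mathbf w^F$, $\mathbf w^F=\prod_{e\in F}w_e$; the cavity ratio is $\Gamma^e_\mu(\mathbf w')=Z^{/e}(\mathbf w')/Z^{\setminus e}(\mathbf w')$ where $Z^{\setminus e}(\mathbf w')=\sum_{F\not\ni e}\mu(F)\mathbf w'^F$, $Z^{/e}(\mathbf w')=\sum_{F\not\ni e}\mu(F\cup\{e\})\mathbf w'^F$; for $\mathbf w\in(0,\infty)^E$, $\mathbb P^{\mathbf w}_\mu(\mathcal F=F)=\mu(F)\mathbf w^F/Z(\mathbf w)$. $\mu$ is Rayleigh if for all $\mathbf w\in(0,\infty)^E$, $e\neq f$: $\mathbb P^{\mathbf w}_\mu(e,f\in\mathcal F)\le\mathbb P^{\mathbf w}_\mu(e\in\mathcal F)\mathbb P^{\mathbf w}_\mu(f\in\mathcal F)$; size-increasing if for all $\mathbf w\in(0,\infty)^E$, $e\in E$: $\mathbb E^{\mathbf w}_\mu[|\mathcal F|\mathbf 1_{e\in\mathcal F}]>\mathbb E^{\mathbf w}_\mu|\mathcal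 F|\,\mathbb P^{\mathbf w}_\mu(e\in\mathcal F)$; cavity-monotone if $\mu(\emptyset)>0$, Rayleigh and size-increasing. Networks: a network is a simple locally finite graph $G=(V,E)$ with, for each $i\in V$, a local measure $\mu_i$ over the subsets of $E_i$ (edges incident to $i$); cavity-monotone if every $\mu_i$ is; $\partial i$ is the set of neighbours of $i$. Configurations $\mathbf x\in[0,\infty)^{\vec E}$; cavity operator $\Gamma_G(\mathbf x)_{i\to j}=\Gamma^{ij}_{\mu_i}(x_{k\to i}:k\in\partial i\setminus\{j\})$; cavity equation at activity $t$: $\mathbf x=t\Gamma_G(\mathbf x)$; a solution is globally attractive if the iterates of $t\Gamma_G$ from any configuration converge coordinatewise to it. *)

theory Defs
  imports Complex_Main "HOL-Library.Countable"
begin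

text \<open>A measure over the subsets of E is mu :: 'e set => real, nonnegative on Pow E.
  Weights w :: 'e => real; only the values on E matter.\<close>

definition wpow :: "('e \<Rightarrow> real) \<Rightarrow> 'e set \<Rightarrow> real" where
  "wpow w F = (\<Prod>e\<in>F. w e)"

definition partfun :: "('e set \<Rightarrow> real) \<Rightarrow> 'e set \<Rightarrow> ('e \<Rightarrow> real) \<Rightarrow> real" where
  "partfun mu E w = (\<Sum>F\<in>Pow E. mu F * wpow w F)"

definition partfun_del :: "('e set \<Rightarrow> real) \<Rightarrow> 'e set \<Rightarrow> 'e \<Rightarrow> ('e \<Rightarrow> real) \<Rightarrow> real" where
  "partfun_del mu E e w = (\<Sum>F\<in>{F\<in>Pow E. e \<notin> F}. mu F * wpow w F)"

definition partfun_con :: "('e set \<Rightarrow> real) \<Rightarrow> 'e set \<Rightarrow> 'e \<Rightarrow> ('e \<Rightarrow> real) \<Rightarrow> real" where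
  "partfun_con mu E e w = (\<Sum>F\<in>{F\<in>Pow E. e \<notin> F}. mu (insert e F) * wpow w F)"

definition cavity_ratio :: "('e set \<Rightarrow> real) \<Rightarrow> 'e set \<Rightarrow> 'e \<Rightarrow> ('e \<Rightarrow> real) \<Rightarrow> real" where
  "cavity_ratio mu E e w = partfun_con mu E e w / partfun_del mu E e w"

definition prob_set :: "('e set \<Rightarrow> real) \<Rightarrow> 'e set \<Rightarrow> ('e \<Rightarrow> real) \<Rightarrow> 'e set \<Rightarrow> real" where
  "prob_set mu E w F = mu F * wpow w F / partfun mu E w"

definition expect :: "('e set \<Rightarrow> real) \<Rightarrow> 'e set \<Rightarrow> ('e \<Rightarrow> real) \<Rightarrow> ('e set \<Rightarrow> real) \<Rightarrow> real" where
  "expect mu E w g = (\<Sum>F\<in>Pow E. g F * prob_set mu E w F)"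

definition prob_contains :: "('e set \<Rightarrow> real) \<Rightarrow> 'e set \<Rightarrow> ('e \<Rightarrow> real) \<Rightarrow> 'e set \<Rightarrow> real" where
  "prob_contains mu E w S = (\<Sum>F\<in>{F\<in>Pow E. S \<subseteq> F}. prob_set mu E w F)"

definition pos_weights :: "'e set \<Rightarrow> ('e \<Rightarrow> real) \<Rightarrow> bool" where
  "pos_weights E w \<longleftrightarrow> (\<forall>e\<in>E. w e > 0)"

definition is_measure :: "('e set \<Rightarrow> real) \<Rightarrow> 'e set \<Rightarrow> bool" where
  "is_measure mu E \<longleftrightarrow> finite E \<and> (\<forall>F\<in>Pow E. mu F \<ge> 0)"

definition rayleigh :: "('e set \<Rightarrow> real) \<Rightarrow> 'e set \<Rightarrow> bool" where
  "rayleigh mu E \<longleftrightarrow> (\<forall>w. pos_weights E w \<longrightarrow> (\<forall>e\<in>E. \<forall>f\<in>E. e \<noteq> f \<longrightarrow>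
      prob_contains mu E w {e, f} \<le> prob_contains mu E w {e} * prob_contains mu E w {f}))"

definition size_increasing :: "('e set \<Rightarrow> real) \<Rightarrow> 'e set \<Rightarrow> bool" where
  "size_increasing mu E \<longleftrightarrow> (\<forall>w. pos_weights E w \<longrightarrow> (\<forall>e\<in>E.
      expect mu E w (\<lambda>F. real (card F) * (if e \<in> F then 1 else 0))
        > expect mu E w (\<lambda>F. real (card F)) * prob_contains mu E w {e}))"

definition cavity_monotone :: "('e set \<Rightarrow> real) \<Rightarrow> 'e set \<Rightarrow> bool" where
  "cavity_monotone mu E \<longleftrightarrow> is_measure mu E \<and> mu {} > 0 \<and> rayleigh mu E \<and> size_increasing mu E"

text \<open>A simple, locally finite graph on a countable vertex type 'v (vertex set = UNIV),
  given by a symmetric irreflexive adjacency relation. Edges are the 2-sets {i,j}.\<close>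

definition simple_lf_graph :: "('v \<Rightarrow> 'v \<Rightarrow> bool) \<Rightarrow> bool" where
  "simple_lf_graph adj \<longleftrightarrow> (\<forall>i j. adj i j \<longrightarrow> adj j i) \<and> (\<forall>i. \<not> adj i i)
      \<and> (\<forall>i. finite {j. adj i j})"

definition inc_edges :: "('v \<Rightarrow> 'v \<Rightarrow> bool) \<Rightarrow> 'v \<Rightarrow> 'v set set" where
  "inc_edges adj i = {{i, j} | j. adj i j}"

definition cavity_monotone_network :: "('v \<Rightarrow> 'v \<Rightarrow> bool) \<Rightarrow> ('v \<Rightarrow> 'v set set \<Rightarrow> real) \<Rightarrow> bool" where
  "cavity_monotone_network adj mu \<longleftrightarrow> simple_lf_graph adj \<and>
      (\<forall>i. cavity_monotone (mu i) (inc_edges adj i))"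

text \<open>Configurations: x i j = x_{i\<rightarrow>j}, meaningful on directed edges (adj i j).\<close>
definition configuration :: "('v \<Rightarrow> 'v \<Rightarrow> bool) \<Rightarrow> ('v \<Rightarrow> 'v \<Rightarrow> real) \<Rightarrow> bool" where
  "configuration adj x \<longleftrightarrow> (\<forall>i j. adj i j \<longrightarrow> x i j \<ge> 0)"

text \<open>Cavity operator: Gamma_G(x)_{i\<rightarrow>j} = Gamma^{ij}_{mu_i}(x_{k\<rightarrow>i} : k in \<partial>i - {j});
  the weight of the edge e = {i,k} at i is x_{k\<rightarrow>i}.\<close>
definition cavity_op :: "('v \<Rightarrow> 'v \<Rightarrow> bool) \<Rightarrow> ('v \<Rightarrow> 'v set set \<Rightarrow> real) \<Rightarrow> ('v \<Rightarrow> 'v \<Rightarrow> real) \<Rightarrow> 'v \<Rightarrow> 'v \<Rightarrow> real" where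
  "cavity_op adj mu x i j =
     cavity_ratio (mu i) (inc_edges adj i) {i, j} (\<lambda>e. x (the_elem (e - {i})) i)"

definition solves_cavity_eq :: "('v \<Rightarrow> 'v \<Rightarrow> bool) \<Rightarrow> ('v \<Rightarrow> 'v set set \<Rightarrow> real) \<Rightarrow> real \<Rightarrow> ('v \<Rightarrow> 'v \<Rightarrow> real) \<Rightarrow> bool" where
  "solves_cavity_eq adj mu t x \<longleftrightarrow> configuration adj x \<and>
      (\<forall>i j. adj i j \<longrightarrow> x i j = t * cavity_op adj mu x i j)"

definition globally_attractive :: "('v \<Rightarrow> 'v \<Rightarrow> bool) \<Rightarrow> ('v \<Rightarrow> 'v set set \<Rightarrow> real) \<Rightarrow> real \<Rightarrow> ('v \<Rightarrow> 'v \<Rightarrow> real) \<Rightarrow> bool" where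
  "globally_attractive adj mu t x \<longleftrightarrow> (\<forall>y. configuration adj y \<longrightarrow> (\<forall>i j. adj i j \<longrightarrow>
      (\<lambda>n. (((\<lambda>z a b. t * cavity_op adj mu z a b) ^^ n) y) i j) \<longlonglongrightarrow> x i j))"

end

theory Submission
  imports Defs
begin

lemma sum_Pow_insert:
  assumes "finite A" "a \<notin> A"
  shows "sum g (Pow (insert a A)) = sum g (Pow A) + (\<Sum>F\<in>Pow A. g (insert a F))"
proof -
  have inj: "inj_on (insert a) (Pow A)" using assms(2) unfolding inj_on_def
    by (metis PowD in_mono insert_ident)
  have d: "Pow A \<inter> insert a ` Pow A = {}" using assms by auto
  have "sum g (Pow (insert a A)) = sum g (Pow A \<union> insert a ` Pow A)" by (simp add: Pow_insert)
  also have "\<dots> = sum g (Pow A) + sum g (insert a ` Pow A)"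
    using assms d by (intro sum.union_disjoint) auto
  also have "sum g (insert a ` Pow A) = (\<Sum>F\<in>Pow A. g (insert a F))"
    using inj by (simp add: sum.reindex)
  finally show ?thesis .
qed

lemma wpow_insert: "finite F \<Longrightarrow> a \<notin> F \<Longrightarrow> wpow w (insert a F) = w a * wpow w F"
  by (simp add: wpow_def)

lemma wpow_scale: "finite F \<Longrightarrow> wpow (\<lambda>x. c * w x) F = c ^ card F * wpow w F"
  by (simp add: wpow_def prod.distrib)

lemma wpow_nonneg: "(\<And>x. x \<in> F \<Longrightarrow> w x \<ge> 0) \<Longrightarrow> wpow w F \<ge> 0"
  by (simp add: wpow_def prod_nonneg)

lemma wpow_cong: "(\<And>x. x \<in> F \<Longrightarrow> w x = w' x) \<Longrightarrow> wpow w F = wpow w' F"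
  by (simp add: wpow_def)

lemma del_Pow: "partfun_del mu E e w = (\<Sum>F\<in>Pow (E - {e}). mu F * wpow w F)"
proof -
  have "{F\<in>Pow E. e \<notin> F} = Pow (E - {e})" by auto
  then show ?thesis by (simp add: partfun_del_def)
qed

lemma con_Pow: "partfun_con mu E e w = (\<Sum>F\<in>Pow (E - {e}). mu (insert e F) * wpow w F)"
proof -
  have "{F\<in>Pow E. e \<notin> F} = Pow (E - {e})" by auto
  then show ?thesis by (simp add: partfun_con_def)
qed

lemma del_pos:
  assumes "is_measure mu E" "mu {} > 0" "\<And>x. x \<in> E \<Longrightarrow> w x \<ge> 0"
  shows "partfun_del mu E e w > 0"
  unfolding del_Pow
proof (rule sum_pos2[where i="{}"])
  show "finite (Pow (E - {e}))" using assms(1) by (simp add: is_measure_def)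
  show "{} \<in> Pow (E - {e})" by simp
  show "0 < mu {} * wpow w {}" using assms(2) by (simp add: wpow_def)
  show "0 \<le> mu F * wpow w F" if "F \<in> Pow (E - {e})" for F
  proof -
    note that
    then have "F \<subseteq> E" by auto
    then show "0 \<le> mu F * wpow w F" using assms(1,3)
      by (intro mult_nonneg_nonneg wpow_nonneg) (auto simp: is_measure_def)
  qed
qed

lemma con_nonneg:
  assumes "is_measure mu E" "e \<in> E" "\<And>x. x \<in> E \<Longrightarrow> w x \<ge> 0"
  shows "partfun_con mu E e w \<ge> 0"
  unfolding con_Pow
proof (rule sum_nonneg)
  fix F assume "F \<in> Pow (E - {e})"
  then have "F \<subseteq> E" "insert e F \<subseteq> E" using assms(2) by auto
  then show "0 \<le> mu (insert e F) * wpow w F" using assms(1,3)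
    by (intro mult_nonneg_nonneg wpow_nonneg) (auto simp: is_measure_def)
qed

lemma partfun_pos:
  assumes "is_measure mu E" "mu {} > 0" "\<And>x. x \<in> E \<Longrightarrow> w x \<ge> 0"
  shows "partfun mu E w > 0"
  unfolding partfun_def
proof (rule sum_pos2[where i="{}"])
  show "finite (Pow E)" using assms(1) by (simp add: is_measure_def)
  show "0 < mu {} * wpow w {}" using assms(2) by (simp add: wpow_def)
  show "0 \<le> mu F * wpow w F" if "F \<in> Pow E" for F
  proof -
    note that
    then have "F \<subseteq> E" by auto
    then show "0 \<le> mu F * wpow w F" using assms(1,3)
      by (intro mult_nonneg_nonneg wpow_nonneg) (auto simp: is_measure_def)
  qed
qed simp

lemma tendsto_wsum:
  "((\<lambda>\<epsilon>. \<Sum>F\<in>S. c F * wpow (\<lambda>x. a * (w x + \<epsilon>)) F) \<longlongrightarrow> (\<Sum>F\<in>S. c F * wpow (\<lambda>x. a * w x) F)) (at_right 0)"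
proof -
  have "((\<lambda>\<epsilon>. \<Sum>F\<in>S. c F * (\<Prod>x\<in>F. a * (w x + \<epsilon>))) \<longlongrightarrow> (\<Sum>F\<in>S. c F * (\<Prod>x\<in>F. a * (w x + 0)))) (at_right 0)"
    by (intro tendsto_intros)
  then show ?thesis by (simp add: wpow_def)
qed

lemma tendsto_wsum1:
  "((\<lambda>\<epsilon>. \<Sum>F\<in>S. c F * wpow (\<lambda>x. w x + \<epsilon>) F) \<longlongrightarrow> (\<Sum>F\<in>S. c F * wpow w F)) (at_right 0)"
  using tendsto_wsum[where S=S and c=c and a=1 and w=w] by simp

lemma expect_eq: "expect mu E w g = (\<Sum>F\<in>Pow E. g F * (mu F * wpow w F)) / partfun mu E w"
  by (simp add: expect_def prob_set_def sum_divide_distrib)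

lemma prob_contains_eq: "finite E \<Longrightarrow> prob_contains mu E w S = (\<Sum>F\<in>Pow E. if S \<subseteq> F then mu F * wpow w F else 0) / partfun mu E w"
  by (simp add: prob_contains_def prob_set_def sum_divide_distrib sum.inter_filter[symmetric])


definition qA :: "('e set \<Rightarrow> real) \<Rightarrow> 'e set \<Rightarrow> ('e \<Rightarrow> real) \<Rightarrow> real" where
  "qA m S w = (\<Sum>F\<in>Pow S. m F * wpow w F)"

lemma sum_Pow2:
  assumes "finite A" "a \<notin> A" "b \<notin> A" "a \<noteq> b"
  shows "sum g (Pow (insert a (insert b A))) =
    (\<Sum>F\<in>Pow A. g F + g (insert b F) + g (insert a F) + g (insert a (insert b F)))"
  using assms by (simp add: sum_Pow_insert sum.distrib add.assoc)

lemma sum_Pow4: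
  assumes "finite A" "a \<notin> A" "b \<notin> A" "a \<noteq> b"
  shows "(\<Sum>F\<in>Pow (insert a (insert b A)). g F * wpow w F) =
    qA g A w + w b * qA (\<lambda>F. g (insert b F)) A w + w a * qA (\<lambda>F. g (insert a F)) A w
     + w a * w b * qA (\<lambda>F. g (insert a (insert b F))) A w"
proof -
  have "(\<Sum>F\<in>Pow (insert a (insert b A)). g F * wpow w F) =
    (\<Sum>F\<in>Pow A. g F * wpow w F + w b * (g (insert b F) * wpow w F) + w a * (g (insert a F) * wpow w F)
       + w a * w b * (g (insert a (insert b F)) * wpow w F))"
    unfolding sum_Pow2[OF assms]
  proof (rule sum.cong[OF refl])
    fix F assume "F \<in> Pow A"
    then have "finite F" "a \<notin> F" "b \<notin> F" "a \<notin> insert b F" using assms finite_subset by auto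
    then show "g F * wpow w F + g (insert b F) * wpow w (insert b F) + g (insert a F) * wpow w (insert a F) +
         g (insert a (insert b F)) * wpow w (insert a (insert b F)) =
         g F * wpow w F + w b * (g (insert b F) * wpow w F) + w a * (g (insert a F) * wpow w F) +
         w a * w b * (g (insert a (insert b F)) * wpow w F)"
      by (simp add: wpow_insert)
  qed
  then show ?thesis by (simp add: qA_def sum.distrib sum_distrib_left)
qed

lemma sum_Pow_if_notin:
  "a \<notin> A \<Longrightarrow> (\<Sum>F\<in>Pow A. (if a \<in> F \<and> P F then x F else 0) * y F) = (0::real)"
  "a \<notin> A \<Longrightarrow> (\<Sum>F\<in>Pow A. (if a \<in> F then x F else 0) * y F) = (0::real)"
  by (auto intro!: sum.neutral)

lemma ray_pos:
  assumes m: "is_measure mu E" "mu {} > 0" and r: "rayleigh mu E"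
    and ef: "e \<in> E" "f \<in> E" "e \<noteq> f" and w: "pos_weights E w"
  shows "qA mu (E - {e,f}) w * qA (\<lambda>F. mu (insert e (insert f F))) (E - {e,f}) w
       \<le> qA (\<lambda>F. mu (insert e F)) (E - {e,f}) w * qA (\<lambda>F. mu (insert f F)) (E - {e,f}) w"
proof -
  define A where "A = E - {e,f}"
  have fin: "finite E" using m by (simp add: is_measure_def)
  have fA: "finite A" "e \<notin> A" "f \<notin> A" using fin by (auto simp: A_def)
  have Eeq: "E = insert e (insert f A)" using ef by (auto simp: A_def)
  have nz: "\<And>F. F \<in> Pow A \<Longrightarrow> (e \<in> F) = False" "\<And>F. F \<in> Pow A \<Longrightarrow> (f \<in> F) = False"
    using fA by auto
  define A0 where "A0 = qA mu A w"
  define B0 where "B0 = qA (\<lambda>F. mu (insert f F)) A w"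
  define A1 where "A1 = qA (\<lambda>F. mu (insert e F)) A w"
  define B1 where "B1 = qA (\<lambda>F. mu (insert e (insert f F))) A w"
  have we: "w e > 0" "w f > 0" using w ef by (auto simp: pos_weights_def)
  have Z: "partfun mu E w = A0 + w f * B0 + w e * A1 + w e * w f * B1"
    unfolding partfun_def A0_def B0_def A1_def B1_def Eeq
    using sum_Pow4[OF fA(1,2,3) ef(3), of mu w] by simp
  have Zp: "partfun mu E w > 0"
    using partfun_pos[OF m] w by (auto simp: pos_weights_def intro: less_imp_le)
  have Pef: "prob_contains mu E w {e,f} = w e * w f * B1 / partfun mu E w"
  proof -
    have "(\<Sum>F\<in>Pow E. if {e,f} \<subseteq> F then mu F * wpow w F else 0)
       = (\<Sum>F\<in>Pow E. (if {e,f} \<subseteq> F then mu F else 0) * wpow w F)"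
      by (rule sum.cong) auto
    also have "\<dots> = w e * w f * B1"
      unfolding B1_def Eeq sum_Pow4[OF fA(1,2,3) ef(3)] using fA ef(3) by (simp add: qA_def sum_Pow_if_notin)
    finally show ?thesis using fin by (simp add: prob_contains_eq)
  qed
  have Pe: "prob_contains mu E w {e} = (w e * A1 + w e * w f * B1) / partfun mu E w"
  proof -
    have "(\<Sum>F\<in>Pow E. if {e} \<subseteq> F then mu F * wpow w F else 0)
       = (\<Sum>F\<in>Pow E. (if e \<in> F then mu F else 0) * wpow w F)"
      by (rule sum.cong) auto
    also have "\<dots> = w e * A1 + w e * w f * B1"
      unfolding A1_def B1_def Eeq sum_Pow4[OF fA(1,2,3) ef(3)] using fA ef(3) by (simp add: qA_def sum_Pow_if_notin)
    finally show ?thesis using fin by (simp add: prob_contains_eq)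
  qed
  have Pf: "prob_contains mu E w {f} = (w f * B0 + w e * w f * B1) / partfun mu E w"
  proof -
    have "(\<Sum>F\<in>Pow E. if {f} \<subseteq> F then mu F * wpow w F else 0)
       = (\<Sum>F\<in>Pow E. (if f \<in> F then mu F else 0) * wpow w F)"
      by (rule sum.cong) auto
    also have "\<dots> = w f * B0 + w e * w f * B1"
      unfolding B0_def B1_def Eeq sum_Pow4[OF fA(1,2,3) ef(3)] using fA ef(3) by (simp add: qA_def sum_Pow_if_notin)
    finally show ?thesis using fin by (simp add: prob_contains_eq)
  qed
  have "prob_contains mu E w {e,f} \<le> prob_contains mu E w {e} * prob_contains mu E w {f}"
    using r w ef by (simp add: rayleigh_def)
  then have "w e * w f * B1 / partfun mu E w \<le>
     (w e * A1 + w e * w f * B1) * (w f * B0 + w e * w f * B1) / (partfun mu E w * partfun mu E w)"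
    unfolding Pef Pe Pf by simp
  then have "w e * w f * B1 * partfun mu E w \<le> (w e * A1 + w e * w f * B1) * (w f * B0 + w e * w f * B1)"
    using Zp by (simp add: field_simps)
  then have "w e * w f * (A0 * B1) \<le> w e * w f * (A1 * B0)"
    unfolding Z by (simp add: algebra_simps)
  then have "A0 * B1 \<le> A1 * B0" using we by (simp add: mult_le_cancel_left_pos)
  then show ?thesis by (simp add: A0_def B0_def A1_def B1_def A_def)
qed


lemma ray_nonneg:
  assumes m: "is_measure mu E" "mu {} > 0" and r: "rayleigh mu E"
    and ef: "e \<in> E" "f \<in> E" "e \<noteq> f" and w: "\<And>x. x \<in> E \<Longrightarrow> w x \<ge> 0"
  shows "qA mu (E - {e,f}) w * qA (\<lambda>F. mu (insert e (insert f F))) (E - {e,f}) w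
       \<le> qA (\<lambda>F. mu (insert e F)) (E - {e,f}) w * qA (\<lambda>F. mu (insert f F)) (E - {e,f}) w"
proof -
  have lim: "\<And>g. ((\<lambda>\<epsilon>. qA g (E - {e,f}) (\<lambda>x. w x + \<epsilon>)) \<longlongrightarrow> qA g (E - {e,f}) w) (at_right 0)"
    unfolding qA_def by (rule tendsto_wsum1)
  have ev: "eventually (\<lambda>\<epsilon>. qA mu (E - {e,f}) (\<lambda>x. w x + \<epsilon>) * qA (\<lambda>F. mu (insert e (insert f F))) (E - {e,f}) (\<lambda>x. w x + \<epsilon>)
       \<le> qA (\<lambda>F. mu (insert e F)) (E - {e,f}) (\<lambda>x. w x + \<epsilon>) * qA (\<lambda>F. mu (insert f F)) (E - {e,f}) (\<lambda>x. w x + \<epsilon>)) (at_right 0)"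
    using eventually_at_right_less[of "0::real"]
  proof (rule eventually_mono)
    fix \<epsilon> :: real assume "0 < \<epsilon>"
    then have "pos_weights E (\<lambda>x. w x + \<epsilon>)" using w by (auto simp: pos_weights_def add_nonneg_pos)
    then show "qA mu (E - {e,f}) (\<lambda>x. w x + \<epsilon>) * qA (\<lambda>F. mu (insert e (insert f F))) (E - {e,f}) (\<lambda>x. w x + \<epsilon>)
       \<le> qA (\<lambda>F. mu (insert e F)) (E - {e,f}) (\<lambda>x. w x + \<epsilon>) * qA (\<lambda>F. mu (insert f F)) (E - {e,f}) (\<lambda>x. w x + \<epsilon>)"
      by (rule ray_pos[OF m r ef])
  qed
  show ?thesis
    by (rule tendsto_le[OF trivial_limit_at_right_real tendsto_mult[OF lim lim] tendsto_mult[OF lim lim] ev])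
qed

lemma sum_Pow1:
  assumes "finite A" "a \<notin> A"
  shows "(\<Sum>F\<in>Pow (insert a A). g F * wpow w F) = qA g A w + w a * qA (\<lambda>F. g (insert a F)) A w"
proof -
  have "(\<Sum>F\<in>Pow (insert a A). g F * wpow w F) = (\<Sum>F\<in>Pow A. g F * wpow w F + w a * (g (insert a F) * wpow w F))"
    unfolding sum_Pow_insert[OF assms] sum.distrib[symmetric]
  proof (rule sum.cong[OF refl])
    fix F assume "F \<in> Pow A"
    then have "finite F" "a \<notin> F" using assms finite_subset by auto
    then show "g F * wpow w F + g (insert a F) * wpow w (insert a F) = g F * wpow w F + w a * (g (insert a F) * wpow w F)"
      by (simp add: wpow_insert)
  qed
  then show ?thesis by (simp add: qA_def sum.distrib sum_distrib_left)
qed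

lemma qA_cong: "(\<And>x. x \<in> A \<Longrightarrow> w x = w' x) \<Longrightarrow> qA g A w = qA g A w'"
  unfolding qA_def by (intro sum.cong refl arg_cong2[where f="(*)"] wpow_cong) auto

lemma qA_nonneg: "(\<And>F. F \<subseteq> A \<Longrightarrow> g F \<ge> 0) \<Longrightarrow> (\<And>x. x \<in> A \<Longrightarrow> w x \<ge> 0) \<Longrightarrow> qA g A w \<ge> 0"
  unfolding qA_def by (intro sum_nonneg mult_nonneg_nonneg wpow_nonneg) auto

lemma gamma_mono1:
  assumes m: "is_measure mu E" "mu {} > 0" and r: "rayleigh mu E"
    and ef: "e \<in> E" "f \<in> E" "e \<noteq> f"
    and v: "\<And>x. x \<in> E \<Longrightarrow> v x \<ge> 0" and v': "\<And>x. x \<in> E \<Longrightarrow> v' x \<ge> 0"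
    and agree: "\<And>x. x \<in> E \<Longrightarrow> x \<noteq> f \<Longrightarrow> v x = v' x" and le: "v f \<le> v' f"
  shows "cavity_ratio mu E e v' \<le> cavity_ratio mu E e v"
proof -
  define A where "A = E - {e,f}"
  have fin: "finite E" using m by (simp add: is_measure_def)
  have fA: "finite A" "f \<notin> A" using fin by (auto simp: A_def)
  have Eeq: "E - {e} = insert f A" using ef by (auto simp: A_def)
  define A0 where "A0 = qA mu A v"
  define B0 where "B0 = qA (\<lambda>F. mu (insert f F)) A v"
  define A1 where "A1 = qA (\<lambda>F. mu (insert e F)) A v"
  define B1 where "B1 = qA (\<lambda>F. mu (insert e (insert f F))) A v"
  have ag: "\<And>x. x \<in> A \<Longrightarrow> v' x = v x" using agree by (auto simp: A_def)
  have D: "\<And>u. partfun_del mu E e u = qA mu A u + u f * qA (\<lambda>F. mu (insert f F)) A u"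
    unfolding del_Pow Eeq by (rule sum_Pow1[OF fA])
  have C: "\<And>u. partfun_con mu E e u = qA (\<lambda>F. mu (insert e F)) A u + u f * qA (\<lambda>F. mu (insert e (insert f F))) A u"
    unfolding con_Pow Eeq by (rule sum_Pow1[OF fA])
  have Dv: "partfun_del mu E e v = A0 + v f * B0" and Dv': "partfun_del mu E e v' = A0 + v' f * B0"
    and Cv: "partfun_con mu E e v = A1 + v f * B1" and Cv': "partfun_con mu E e v' = A1 + v' f * B1"
    unfolding D C A0_def B0_def A1_def B1_def using ag qA_cong by metis+
  have key: "A0 * B1 \<le> A1 * B0" using ray_nonneg[OF m r ef v] by (simp add: A0_def B0_def A1_def B1_def A_def)
  have p1: "A0 + v f * B0 > 0" using del_pos[OF m, of v e] v Dv by simp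
  have p2: "A0 + v' f * B0 > 0" using del_pos[OF m, of v' e] v' Dv' by simp
  have "(A1 + v' f * B1) * (A0 + v f * B0) \<le> (A1 + v f * B1) * (A0 + v' f * B0)"
  proof -
    have "(A1 + v f * B1) * (A0 + v' f * B0) - (A1 + v' f * B1) * (A0 + v f * B0) = (v' f - v f) * (A1 * B0 - A0 * B1)"
      by (simp add: algebra_simps)
    moreover have "(v' f - v f) * (A1 * B0 - A0 * B1) \<ge> 0" using le key by simp
    ultimately show ?thesis by linarith
  qed
  then show ?thesis unfolding cavity_ratio_def Dv Dv' Cv Cv' using p1 p2
    by (simp add: field_simps)
qed


lemma gamma_cong:
  assumes "\<And>x. x \<in> E - {e} \<Longrightarrow> v x = v' x"
  shows "cavity_ratio mu E e v = cavity_ratio mu E e v'"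
proof -
  have "\<And>F. F \<in> Pow (E - {e}) \<Longrightarrow> wpow v F = wpow v' F"
    using assms by (intro wpow_cong) auto
  then show ?thesis unfolding cavity_ratio_def del_Pow con_Pow by (metis (no_types, lifting) sum.cong)
qed

lemma gamma_anti:
  assumes m: "is_measure mu E" "mu {} > 0" and r: "rayleigh mu E" and e: "e \<in> E"
    and v: "\<And>x. x \<in> E \<Longrightarrow> v x \<ge> 0" and v': "\<And>x. x \<in> E \<Longrightarrow> v' x \<ge> 0"
    and le: "\<And>x. x \<in> E \<Longrightarrow> v x \<le> v' x"
  shows "cavity_ratio mu E e v' \<le> cavity_ratio mu E e v"
proof -
  define u where "u S = (\<lambda>x. if x \<in> S then v' x else v x)" for S
  have fin: "finite E" using m by (simp add: is_measure_def)
  have "S \<subseteq> E - {e} \<longrightarrow> cavity_ratio mu E e (u S) \<le> cavity_ratio mu E e v" if "finite S" for S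
    using that
  proof (induction S rule: finite_induct)
    case empty
    then show ?case by (simp add: u_def)
  next
    case (insert f S)
    show ?case
    proof
      assume sub: "insert f S \<subseteq> E - {e}"
      have "cavity_ratio mu E e (u (insert f S)) \<le> cavity_ratio mu E e (u S)"
      proof (rule gamma_mono1[OF m r e])
        show "f \<in> E" "e \<noteq> f" using sub by auto
        show "\<And>x. x \<in> E \<Longrightarrow> 0 \<le> u S x" "\<And>x. x \<in> E \<Longrightarrow> 0 \<le> u (insert f S) x"
          using v v' by (auto simp: u_def)
        show "\<And>x. x \<in> E \<Longrightarrow> x \<noteq> f \<Longrightarrow> u S x = u (insert f S) x" by (auto simp: u_def)
        show "u S f \<le> u (insert f S) f" using insert(2) le sub by (auto simp: u_def)
      qed
      also have "\<dots> \<le> cavity_ratio mu E e v" using insert sub by auto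
      finally show "cavity_ratio mu E e (u (insert f S)) \<le> cavity_ratio mu E e v" .
    qed
  qed
  then have "cavity_ratio mu E e (u (E - {e})) \<le> cavity_ratio mu E e v" using fin by auto
  moreover have "cavity_ratio mu E e (u (E - {e})) = cavity_ratio mu E e v'"
    by (rule gamma_cong) (simp add: u_def)
  ultimately show ?thesis by simp
qed

lemma sum_PowE:
  assumes "finite E" "e \<in> E"
  shows "sum h (Pow E) = (\<Sum>G\<in>Pow (E - {e}). h G + h (insert e G))"
proof -
  have "E = insert e (E - {e})" using assms by auto
  then have "sum h (Pow E) = sum h (Pow (insert e (E - {e})))" by simp
  also have "\<dots> = sum h (Pow (E - {e})) + (\<Sum>G\<in>Pow (E - {e}). h (insert e G))"
    by (rule sum_Pow_insert) (use assms in auto)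
  also have "\<dots> = (\<Sum>G\<in>Pow (E - {e}). h G + h (insert e G))"
    by (simp add: sum.distrib)
  finally show ?thesis .
qed

lemma size_key:
  assumes m: "is_measure mu E" "mu {} > 0" and si: "size_increasing mu E" and e: "e \<in> E"
    and w: "pos_weights E w"
  shows "((\<Sum>G\<in>Pow (E - {e}). real (card G) * (mu (insert e G) * wpow w G)) + partfun_con mu E e w) * partfun_del mu E e w
       > (\<Sum>G\<in>Pow (E - {e}). real (card G) * (mu G * wpow w G)) * partfun_con mu E e w"
proof -
  define S where "S = Pow (E - {e})"
  define a where "a = (\<Sum>G\<in>S. real (card G) * (mu (insert e G) * wpow w G))"
  define b where "b = (\<Sum>G\<in>S. real (card G) * (mu G * wpow w G))"
  define C where "C = (\<Sum>G\<in>S. mu (insert e G) * wpow w G)"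
  define D where "D = (\<Sum>G\<in>S. mu G * wpow w G)"
  have fin: "finite E" using m by (simp add: is_measure_def)
  have GS: "\<And>G. G \<in> S \<Longrightarrow> finite G \<and> e \<notin> G" using fin finite_subset by (auto simp: S_def)
  have we: "w e > 0" using w e by (simp add: pos_weights_def)
  have wnn: "\<And>x. x \<in> E \<Longrightarrow> w x \<ge> 0" using w by (auto simp: pos_weights_def intro: less_imp_le)
  have Z: "partfun mu E w = D + w e * C"
  proof -
    have "partfun mu E w = (\<Sum>G\<in>S. mu G * wpow w G + w e * (mu (insert e G) * wpow w G))"
      unfolding partfun_def sum_PowE[OF fin e] S_def[symmetric]
      by (rule sum.cong[OF refl]) (use GS in \<open>simp add: wpow_insert\<close>)
    then show ?thesis by (simp add: sum.distrib sum_distrib_left C_def D_def)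
  qed
  have Zp: "partfun mu E w > 0" using partfun_pos[OF m wnn] .
  have E1: "expect mu E w (\<lambda>F. real (card F) * (if e \<in> F then 1 else 0)) = w e * (a + C) / partfun mu E w"
  proof -
    have "(\<Sum>F\<in>Pow E. real (card F) * (if e \<in> F then 1 else 0) * (mu F * wpow w F))
       = (\<Sum>G\<in>S. w e * (real (card G) * (mu (insert e G) * wpow w G)) + w e * (mu (insert e G) * wpow w G))"
      unfolding sum_PowE[OF fin e] S_def[symmetric]
      by (rule sum.cong[OF refl]) (use GS in \<open>simp add: wpow_insert algebra_simps\<close>)
    then show ?thesis by (simp add: expect_eq sum.distrib sum_distrib_left a_def C_def distrib_left)
  qed
  have E2: "expect mu E w (\<lambda>F. real (card F)) = (b + w e * (a + C)) / partfun mu E w"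
  proof -
    have "(\<Sum>F\<in>Pow E. real (card F) * (mu F * wpow w F))
       = (\<Sum>G\<in>S. real (card G) * (mu G * wpow w G) + (w e * (real (card G) * (mu (insert e G) * wpow w G)) + w e * (mu (insert e G) * wpow w G)))"
      unfolding sum_PowE[OF fin e] S_def[symmetric]
      by (rule sum.cong[OF refl]) (use GS in \<open>simp add: wpow_insert algebra_simps\<close>)
    then show ?thesis by (simp add: expect_eq sum.distrib sum_distrib_left a_def b_def C_def distrib_left)
  qed
  have P: "prob_contains mu E w {e} = w e * C / partfun mu E w"
  proof -
    have "(\<Sum>F\<in>Pow E. if {e} \<subseteq> F then mu F * wpow w F else 0)
       = (\<Sum>G\<in>S. w e * (mu (insert e G) * wpow w G))"
      unfolding sum_PowE[OF fin e] S_def[symmetric]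
      by (rule sum.cong[OF refl]) (use GS in \<open>simp add: wpow_insert algebra_simps\<close>)
    then show ?thesis using fin by (simp add: prob_contains_eq sum_distrib_left C_def)
  qed
  have "w e * (a + C) / partfun mu E w > (b + w e * (a + C)) / partfun mu E w * (w e * C / partfun mu E w)"
    using si w e unfolding size_increasing_def E1[symmetric] E2[symmetric] P[symmetric] by blast
  then have h: "(b + w e * (a + C)) * (w e * C) / (partfun mu E w * partfun mu E w) < w e * (a + C) / partfun mu E w"
    by simp
  have "(b + w e * (a + C)) * (w e * C) / (partfun mu E w * partfun mu E w) * (partfun mu E w * partfun mu E w)
     < w e * (a + C) / partfun mu E w * (partfun mu E w * partfun mu E w)"
    by (rule mult_strict_right_mono[OF h]) (use Zp in simp)
  then have "w e * (a + C) * partfun mu E w > (b + w e * (a + C)) * (w e * C)"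
    using Zp by simp
  then have "w e * ((a + C) * D) > w e * (b * C)" unfolding Z by (simp add: algebra_simps)
  then have "(a + C) * D > b * C" using we by simp
  then show ?thesis by (simp add: a_def b_def C_def D_def S_def del_Pow con_Pow)
qed


lemma gamma_scale_pos:
  assumes m: "is_measure mu E" "mu {} > 0" and si: "size_increasing mu E" and e: "e \<in> E"
    and vpos: "\<And>x. x \<in> E \<Longrightarrow> v x > 0" and st: "0 < s" "s \<le> t"
  shows "s * cavity_ratio mu E e (\<lambda>y. s * v y) \<le> t * cavity_ratio mu E e (\<lambda>y. t * v y)"
proof -
  define S where "S = Pow (E - {e})"
  define Cf where "Cf x = (\<Sum>G\<in>S. mu (insert e G) * (x ^ card G * wpow v G))" for x :: real
  define Df where "Df x = (\<Sum>G\<in>S. mu G * (x ^ card G * wpow v G))" for x :: real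
  define Cd where "Cd x = (\<Sum>G\<in>S. mu (insert e G) * (real (card G) * x ^ (card G - Suc 0) * wpow v G))" for x :: real
  define Dd where "Dd x = (\<Sum>G\<in>S. mu G * (real (card G) * x ^ (card G - Suc 0) * wpow v G))" for x :: real
  have fin: "finite E" using m by (simp add: is_measure_def)
  have GS: "\<And>G. G \<in> S \<Longrightarrow> finite G" using fin finite_subset by (auto simp: S_def)
  have Ceq: "partfun_con mu E e (\<lambda>y. x * v y) = Cf x" for x
    unfolding con_Pow Cf_def S_def[symmetric] by (rule sum.cong[OF refl]) (simp add: GS wpow_scale)
  have Deq: "partfun_del mu E e (\<lambda>y. x * v y) = Df x" for x
    unfolding del_Pow Df_def S_def[symmetric] by (rule sum.cong[OF refl]) (simp add: GS wpow_scale)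
  have dC: "(Cf has_field_derivative Cd x) (at x)" for x
    unfolding Cf_def Cd_def by (intro DERIV_sum DERIV_cmult DERIV_cmult_right DERIV_pow)
  have dD: "(Df has_field_derivative Dd x) (at x)" for x
    unfolding Df_def Dd_def by (intro DERIV_sum DERIV_cmult DERIV_cmult_right DERIV_pow)
  have pw: "\<And>x (n::nat). real n * x ^ (n - Suc 0) * x = real n * x ^ n"
  proof -
    fix x :: real and n :: nat show "real n * x ^ (n - Suc 0) * x = real n * x ^ n"
      by (cases n) auto
  qed
  have xC: "x * Cd x = (\<Sum>G\<in>S. real (card G) * (mu (insert e G) * wpow (\<lambda>y. x * v y) G))" for x
    unfolding Cd_def sum_distrib_left
  proof (rule sum.cong[OF refl])
    fix G assume "G \<in> S"
    have "x * (mu (insert e G) * (real (card G) * x ^ (card G - Suc 0) * wpow v G))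
        = mu (insert e G) * wpow v G * (real (card G) * x ^ (card G - Suc 0) * x)" by (simp add: algebra_simps)
    also have "\<dots> = real (card G) * (mu (insert e G) * wpow (\<lambda>y. x * v y) G)"
      unfolding pw using GS[OF \<open>G \<in> S\<close>] by (simp add: wpow_scale algebra_simps)
    finally show "x * (mu (insert e G) * (real (card G) * x ^ (card G - Suc 0) * wpow v G))
        = real (card G) * (mu (insert e G) * wpow (\<lambda>y. x * v y) G)" .
  qed
  have xD: "x * Dd x = (\<Sum>G\<in>S. real (card G) * (mu G * wpow (\<lambda>y. x * v y) G))" for x
    unfolding Dd_def sum_distrib_left
  proof (rule sum.cong[OF refl])
    fix G assume "G \<in> S"
    have "x * (mu G * (real (card G) * x ^ (card G - Suc 0) * wpow v G))
        = mu G * wpow v G * (real (card G) * x ^ (card G - Suc 0) * x)" by (simp add: algebra_simps)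
    also have "\<dots> = real (card G) * (mu G * wpow (\<lambda>y. x * v y) G)"
      unfolding pw using GS[OF \<open>G \<in> S\<close>] by (simp add: wpow_scale algebra_simps)
    finally show "x * (mu G * (real (card G) * x ^ (card G - Suc 0) * wpow v G))
        = real (card G) * (mu G * wpow (\<lambda>y. x * v y) G)" .
  qed
  have Dpos: "Df x > 0" if "x > 0" for x
  proof -
    have "\<And>y. y \<in> E \<Longrightarrow> 0 \<le> x * v y" using vpos that by (simp add: less_imp_le)
    then show ?thesis using del_pos[OF m, of "\<lambda>y. x * v y" e] Deq[of x] by simp
  qed
  have key: "(x * Cd x + Cf x) * Df x > x * Dd x * Cf x" if "x > 0" for x
  proof -
    have "pos_weights E (\<lambda>y. x * v y)" using vpos that by (simp add: pos_weights_def)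
    from size_key[OF m si e this] show ?thesis
      unfolding xC xD Ceq Deq S_def .
  qed
  define \<phi> where "\<phi> x = x * Cf x / Df x" for x
  have d\<phi>: "(\<phi> has_field_derivative ((1 * Cf x + Cd x * x) * Df x - x * Cf x * Dd x) / (Df x * Df x)) (at x)"
    if "x > 0" for x
    unfolding \<phi>_def[abs_def]
    by (rule DERIV_divide[OF DERIV_mult[OF DERIV_ident dC] dD]) (use Dpos[OF that] in simp)
  have "\<phi> s \<le> \<phi> t"
  proof (rule DERIV_nonneg_imp_increasing_open[OF st(2)])
    fix x assume x: "s < x" "x < t"
    then have xp: "x > 0" using st by simp
    have "(1 * Cf x + Cd x * x) * Df x - x * Cf x * Dd x = (x * Cd x + Cf x) * Df x - x * Dd x * Cf x"
      by (simp add: algebra_simps)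
    then have "(1 * Cf x + Cd x * x) * Df x - x * Cf x * Dd x \<ge> 0"
      using key[OF xp] by linarith
    then have "((1 * Cf x + Cd x * x) * Df x - x * Cf x * Dd x) / (Df x * Df x) \<ge> 0"
      using Dpos[OF xp] by simp
    then show "\<exists>y. (\<phi> has_field_derivative y) (at x) \<and> 0 \<le> y" using d\<phi>[OF xp] by blast
  next
    show "continuous_on {s..t} \<phi>"
      using st by (intro continuous_at_imp_continuous_on ballI DERIV_isCont[OF d\<phi>]) auto
  qed
  then show ?thesis unfolding \<phi>_def cavity_ratio_def Ceq Deq by (simp add: times_divide_eq_right)
qed


lemma gamma_scale:
  assumes m: "is_measure mu E" "mu {} > 0" and si: "size_increasing mu E" and e: "e \<in> E"
    and v: "\<And>x. x \<in> E \<Longrightarrow> v x \<ge> 0" and st: "0 < s" "s \<le> t"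
  shows "s * cavity_ratio mu E e (\<lambda>y. s * v y) \<le> t * cavity_ratio mu E e (\<lambda>y. t * v y)"
proof -
  have lim: "((\<lambda>\<epsilon>. a * cavity_ratio mu E e (\<lambda>y. a * (v y + \<epsilon>))) \<longlongrightarrow> a * cavity_ratio mu E e (\<lambda>y. a * v y)) (at_right 0)"
    if a: "a > 0" for a
  proof -
    have "partfun_del mu E e (\<lambda>y. a * v y) > 0"
      using del_pos[OF m, of "\<lambda>y. a * v y" e] v a by simp
    then show ?thesis unfolding cavity_ratio_def con_Pow del_Pow
      by (intro tendsto_mult tendsto_const tendsto_divide tendsto_wsum) simp
  qed
  have ev: "eventually (\<lambda>\<epsilon>. s * cavity_ratio mu E e (\<lambda>y. s * (v y + \<epsilon>)) \<le> t * cavity_ratio mu E e (\<lambda>y. t * (v y + \<epsilon>))) (at_right 0)"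
    using eventually_at_right_less[of "0::real"]
  proof (rule eventually_mono)
    fix \<epsilon> :: real assume "0 < \<epsilon>"
    then have "\<And>x. x \<in> E \<Longrightarrow> v x + \<epsilon> > 0" using v by (simp add: add_nonneg_pos)
    then show "s * cavity_ratio mu E e (\<lambda>y. s * (v y + \<epsilon>)) \<le> t * cavity_ratio mu E e (\<lambda>y. t * (v y + \<epsilon>))"
      using gamma_scale_pos[OF m si e _ st, of "\<lambda>y. v y + \<epsilon>"] by simp
  qed
  show ?thesis
    using st by (intro tendsto_le[OF trivial_limit_at_right_real lim lim ev]) auto
qed

section \<open>Network level\<close>

lemma inc_edge:
  assumes "simple_lf_graph adj" "e' \<in> inc_edges adj i"
  obtains k where "e' = {i, k}" "adj i k" "adj k i" "the_elem (e' - {i}) = k"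
proof -
  from assms(2) obtain k where k: "e' = {i, k}" "adj i k" by (auto simp: inc_edges_def)
  have "k \<noteq> i" using assms(1) k(2) by (auto simp: simple_lf_graph_def)
  then have "e' - {i} = {k}" using k(1) by auto
  then show ?thesis using that k assms(1) by (auto simp: simple_lf_graph_def)
qed

lemma edge_in: "adj i j \<Longrightarrow> {i, j} \<in> inc_edges adj i"
  by (auto simp: inc_edges_def)

lemma weights_nonneg:
  assumes "simple_lf_graph adj" "configuration adj x" "e' \<in> inc_edges adj i"
  shows "x (the_elem (e' - {i})) i \<ge> 0"
  using assms(3) by (rule inc_edge[OF assms(1)]) (use assms(2) in \<open>auto simp: configuration_def\<close>)

lemma op_anti:
  assumes G: "cavity_monotone_network adj mu" and x: "configuration adj x" and y: "configuration adj y"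
    and le: "\<And>a b. adj a b \<Longrightarrow> x a b \<le> y a b" and ij: "adj i j"
  shows "cavity_op adj mu y i j \<le> cavity_op adj mu x i j"
proof -
  have g: "simple_lf_graph adj" and cm: "cavity_monotone (mu i) (inc_edges adj i)"
    using G by (auto simp: cavity_monotone_network_def)
  show ?thesis unfolding cavity_op_def
  proof (rule gamma_anti)
    show "is_measure (mu i) (inc_edges adj i)" "0 < mu i {}" "rayleigh (mu i) (inc_edges adj i)"
      using cm by (auto simp: cavity_monotone_def)
    show "{i, j} \<in> inc_edges adj i" using ij by (rule edge_in)
    show "\<And>e'. e' \<in> inc_edges adj i \<Longrightarrow> 0 \<le> x (the_elem (e' - {i})) i"
      using weights_nonneg[OF g x] .
    show "\<And>e'. e' \<in> inc_edges adj i \<Longrightarrow> 0 \<le> y (the_elem (e' - {i})) i"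
      using weights_nonneg[OF g y] .
    show "\<And>e'. e' \<in> inc_edges adj i \<Longrightarrow> x (the_elem (e' - {i})) i \<le> y (the_elem (e' - {i})) i"
      by (erule inc_edge[OF g]) (use le in auto)
  qed
qed

lemma op_scale:
  assumes G: "cavity_monotone_network adj mu" and x: "configuration adj x"
    and c: "c \<ge> 1" and ij: "adj i j"
  shows "cavity_op adj mu x i j \<le> c * cavity_op adj mu (\<lambda>a b. c * x a b) i j"
proof -
  have g: "simple_lf_graph adj" and cm: "cavity_monotone (mu i) (inc_edges adj i)"
    using G by (auto simp: cavity_monotone_network_def)
  have "1 * cavity_ratio (mu i) (inc_edges adj i) {i, j} (\<lambda>e'. 1 * x (the_elem (e' - {i})) i)
     \<le> c * cavity_ratio (mu i) (inc_edges adj i) {i, j} (\<lambda>e'. c * x (the_elem (e' - {i})) i)"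
  proof (rule gamma_scale)
    show "is_measure (mu i) (inc_edges adj i)" "0 < mu i {}" "size_increasing (mu i) (inc_edges adj i)"
      using cm by (auto simp: cavity_monotone_def)
    show "{i, j} \<in> inc_edges adj i" using ij by (rule edge_in)
    show "\<And>e'. e' \<in> inc_edges adj i \<Longrightarrow> 0 \<le> x (the_elem (e' - {i})) i"
      using weights_nonneg[OF g x] .
  qed (use c in auto)
  then show ?thesis by (simp add: cavity_op_def)
qed


lemma part1:
  fixes adj :: "'v \<Rightarrow> 'v \<Rightarrow> bool"
    and mu :: "'v \<Rightarrow> 'v set set \<Rightarrow> real"
    and xs :: "real \<Rightarrow> 'v \<Rightarrow> 'v \<Rightarrow> real"
  assumes G: "cavity_monotone_network adj mu"
    and sol: "\<And>t. t > 0 \<Longrightarrow> solves_cavity_eq adj mu t (xs t) \<and> globally_attractive adj mu t (xs t)"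
    and st: "0 < s" "s \<le> t" and ij: "adj i j"
  shows "s / t * xs t i j \<le> xs s i j \<and> xs s i j \<le> xs t i j"
proof -
  define x0 where "x0 = xs s"
  define c where "c = t / s"
  define T where "T = (\<lambda>z a b. t * cavity_op adj mu z a b)"
  have tp: "t > 0" using st by simp
  have c1: "c \<ge> 1" using st by (simp add: c_def)
  have s0: "solves_cavity_eq adj mu s x0" using sol[OF st(1)] by (simp add: x0_def)
  have conf0: "configuration adj x0" using s0 by (simp add: solves_cavity_eq_def)
  have fix0: "\<And>a b. adj a b \<Longrightarrow> x0 a b = s * cavity_op adj mu x0 a b"
    using s0 by (simp add: solves_cavity_eq_def)
  have T1: "\<And>a b. adj a b \<Longrightarrow> T x0 a b = c * x0 a b"
    using fix0 st by (simp add: T_def c_def)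
  have confc: "configuration adj (\<lambda>a b. c * x0 a b)"
    using conf0 c1 by (simp add: configuration_def)
  have conf1: "configuration adj (T x0)"
    using confc T1 by (simp add: configuration_def)
  have T2: "x0 a b \<le> T (T x0) a b" if ab: "adj a b" for a b
  proof -
    have "cavity_op adj mu (T x0) a b \<le> cavity_op adj mu (\<lambda>a b. c * x0 a b) a b"
      by (rule op_anti[OF G confc conf1 _ ab]) (simp add: T1)
    moreover have "cavity_op adj mu (\<lambda>a b. c * x0 a b) a b \<le> cavity_op adj mu (T x0) a b"
      by (rule op_anti[OF G conf1 confc _ ab]) (simp add: T1)
    ultimately have eq: "cavity_op adj mu (T x0) a b = cavity_op adj mu (\<lambda>a b. c * x0 a b) a b" by simp
    have "x0 a b = s * cavity_op adj mu x0 a b" using fix0[OF ab] .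
    also have "\<dots> \<le> s * (c * cavity_op adj mu (\<lambda>a b. c * x0 a b) a b)"
      using op_scale[OF G conf0 c1 ab] st by simp
    also have "\<dots> = t * cavity_op adj mu (T x0) a b" using st unfolding eq by (simp add: c_def)
    also have "\<dots> = T (T x0) a b" by (simp add: T_def)
    finally show ?thesis .
  qed
  have bnd: "\<forall>a b. adj a b \<longrightarrow> x0 a b \<le> (T ^^ n) x0 a b \<and> (T ^^ n) x0 a b \<le> T x0 a b" for n
  proof (induction n)
    case 0
    show ?case using T1 conf0 c1 by (auto simp: configuration_def intro: mult_le_cancel_right1[THEN iffD2] order_trans[OF _ mult_right_mono[of 1 c]])
  next
    case (Suc n)
    have confn: "configuration adj ((T ^^ n) x0)"
      using Suc conf0 unfolding configuration_def by (meson order_trans)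
    show ?case
    proof (intro allI impI)
      fix a b assume ab: "adj a b"
      have "T ((T ^^ n) x0) a b \<le> T x0 a b"
        using op_anti[OF G conf0 confn _ ab] Suc tp by (simp add: T_def)
      moreover have "T (T x0) a b \<le> T ((T ^^ n) x0) a b"
        using op_anti[OF G confn conf1 _ ab] Suc tp by (simp add: T_def)
      ultimately show "x0 a b \<le> (T ^^ Suc n) x0 a b \<and> (T ^^ Suc n) x0 a b \<le> T x0 a b"
        using T2[OF ab] by simp
    qed
  qed
  have lim: "(\<lambda>n. (T ^^ n) x0 i j) \<longlonglongrightarrow> xs t i j"
    using sol[OF tp] conf0 ij unfolding globally_attractive_def T_def by blast
  have lo: "x0 i j \<le> xs t i j"
    by (rule LIMSEQ_le_const[OF lim]) (use bnd ij in auto)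
  have hi: "xs t i j \<le> c * x0 i j"
  proof (rule LIMSEQ_le_const2[OF lim], intro exI allI impI)
    fix n show "(T ^^ n) x0 i j \<le> c * x0 i j" using bnd[of n] ij T1[OF ij] by metis
  qed
  have "s / t * xs t i j \<le> s / t * (c * x0 i j)"
    using hi st by (intro mult_left_mono) auto
  also have "\<dots> = x0 i j" using st by (simp add: c_def)
  finally show ?thesis using lo by (simp add: x0_def)
qed


lemma cont_from_bounds:
  fixes f :: "real \<Rightarrow> real"
  assumes b: "\<And>s t. 0 < s \<Longrightarrow> s \<le> t \<Longrightarrow> s / t * f t \<le> f s \<and> f s \<le> f t"
    and nn: "\<And>t. t > 0 \<Longrightarrow> f t \<ge> 0"
  shows "continuous_on {0<..} f"
proof -
  have "isCont f t0" if t0: "t0 > 0" for t0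
  proof -
    have bound: "\<bar>f t - f t0\<bar> \<le> \<bar>t - t0\<bar> / t0 * f t0" if tp: "t > 0" for t
    proof (cases "t0 \<le> t")
      case True
      have "t0 / t * f t \<le> f t0" "f t0 \<le> f t" using b[OF t0 True] by auto
      then have "f t \<le> t / t0 * f t0" using tp t0 by (simp add: field_simps)
      then have "f t - f t0 \<le> (t - t0) / t0 * f t0" using t0 by (simp add: field_simps)
      then show ?thesis using True \<open>f t0 \<le> f t\<close> by simp
    next
      case False
      have "t / t0 * f t0 \<le> f t" "f t \<le> f t0" using b[OF tp] False by auto
      then have "f t0 - f t \<le> (t0 - t) / t0 * f t0" using t0 by (simp add: field_simps)
      then show ?thesis using False \<open>f t \<le> f t0\<close> by simp
    qed
    have ev: "eventually (\<lambda>t. t > 0) (at t0)"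
      using order_tendstoD(1)[OF tendsto_ident_at t0] .
    have g: "((\<lambda>t. \<bar>t - t0\<bar> / t0 * f t0) \<longlongrightarrow> 0) (at t0)"
    proof -
      have "((\<lambda>t. \<bar>t - t0\<bar> / t0 * f t0) \<longlongrightarrow> \<bar>t0 - t0\<bar> / t0 * f t0) (at t0)"
        by (intro tendsto_intros) (use t0 in auto)
      then show ?thesis by simp
    qed
    have "((\<lambda>t. \<bar>f t - f t0\<bar>) \<longlongrightarrow> 0) (at t0)"
      by (rule tendsto_sandwich[OF _ _ tendsto_const g])
        (use ev bound in \<open>auto elim: eventually_mono\<close>)
    then have "((\<lambda>t. f t - f t0) \<longlongrightarrow> 0) (at t0)" by (rule tendsto_rabs_zero_cancel)
    then have "(f \<longlongrightarrow> f t0) (at t0)" by (rule LIM_zero_cancel)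
    then show ?thesis by (simp add: isCont_def)
  qed
  then show ?thesis by (simp add: continuous_on_eq_continuous_at)
qed

theorem mainTheorem10:
  fixes adj :: "'v::countable \<Rightarrow> 'v \<Rightarrow> bool"
    and mu :: "'v \<Rightarrow> 'v set set \<Rightarrow> real"
    and xs :: "real \<Rightarrow> 'v \<Rightarrow> 'v \<Rightarrow> real"
  assumes "cavity_monotone_network adj mu"
    and "\<And>t. t > 0 \<Longrightarrow> solves_cavity_eq adj mu t (xs t) \<and> globally_attractive adj mu t (xs t)"
    and "\<And>t y. t > 0 \<Longrightarrow> solves_cavity_eq adj mu t y \<Longrightarrow> globally_attractive adj mu t y \<Longrightarrow>
           (\<forall>i j. adj i j \<longrightarrow> y i j = xs t i j)"
  shows "(\<forall>s t i j. 0 < s \<and> s \<le> t \<and> adj i j \<longrightarrow>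
            s / t * xs t i j \<le> xs s i j \<and> xs s i j \<le> xs t i j)
       \<and> (\<forall>i j. adj i j \<longrightarrow> continuous_on {0<..} (\<lambda>t. xs t i j))"
proof -
  have P1: "\<forall>s t i j. 0 < s \<and> s \<le> t \<and> adj i j \<longrightarrow>
            s / t * xs t i j \<le> xs s i j \<and> xs s i j \<le> xs t i j"
    using part1[OF assms(1,2)] by blast
  have P2: "continuous_on {0<..} (\<lambda>t. xs t i j)" if ij: "adj i j" for i j
  proof (rule cont_from_bounds)
    show "\<And>s t. 0 < s \<Longrightarrow> s \<le> t \<Longrightarrow> s / t * xs t i j \<le> xs s i j \<and> xs s i j \<le> xs t i j"
      using P1 ij by blast
    show "\<And>t. 0 < t \<Longrightarrow> 0 \<le> xs t i j"
    proof -
      fix t :: real assume "0 < t"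
      then have "configuration adj (xs t)" using assms(2) by (simp add: solves_cavity_eq_def)
      then show "0 \<le> xs t i j" using ij by (simp add: configuration_def)
    qed
  qed
  show ?thesis using P1 P2 by blast
qed

end
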